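(* \begin{enumerate} \item Both maps $u,v:V(\mathcal{T}\mathcal{L})\mapsto \mathbb C$ define triangular lattices with $MR=-1$. In other words, if $\mathfrak{z}_1,\mathfrak{z}_2,\ldots,\mathfrak{z}_6$ are the vertices (listed counterclockwise) of any elementary hexagon of any of the hexagonal sublattices $\mathcal{H}\mathcal{L}_j$ $(j=0,1,2)$, and if $u_k=u(\mathfrak{z}_k)$ and $v_k=v(\mathfrak{z}_k)$, then there hold both the equations \begin{equation} M(u_1,u_2,\ldots,u_6)=-1 \end{equation} and \begin{equation} M(v_1,v_2,\ldots,v_6)=-1. \end{equation} \item Given a triangular lattice $u:V(\mathcal{T}\mathcal{L})\mapsto\mathbb C$ with $MR=-1$, there exists a unique, up to an affine transformation $v\mapsto av+b$, function $v:V(\mathcal{T}\mathcal{L})\mapsto\mathbb C$ such that the equation $\frac{u(\mathfrak{z}_2)-u(\mathfrak{z}_1)}{u(\mathfrak{z}_3)-u(\mathfrak{z}_2)}=\frac{v(\mathfrak{z}_3)-v(\mathfrak{z}_2)}{v(\mathfrak{z}_1)-v(\mathfrak{z}_3)}$ is satisfied everywhere. This function also defines a triangular lattice with $MR=-1$. \item Given a pair of complex--valued functions $(u,v)$ defined on $V(\mathcal{T}\mathcal{L})$ and satisfying this equation everywhere, there exists a unique, up to an affine transformation, function $w:V(\mathcal{T}\mathcal{L})\mapsto\mathbb C$ such that the pairs $(v,w)$ and $(w,u)$ satisfy the same equation. The function $w$ also defines a triangular lattice with $MR=-1$. \end{enumerate}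
   Context: $\mathcal{T}\mathcal{L}$ is the regular triangular lattice with vertices $k+\ell\omega+m\omega^2$, $\omega=e^{2\pi i/3}$, and edges of length 1; $\mathcal{H}\mathcal{L}_j$ ($j=0,1,2$) is its hexagonal sublattice with vertices satisfying $k+\ell+m\not\equiv j\pmod 3$, whose elementary hexagons have vertices $\mathfrak{z}'+\varepsilon^k$, $\varepsilon=e^{\pi i/3}$, around centers $\mathfrak{z}'$ with $k+\ell+m\equiv j\pmod 3$. The multi-ratio is $M(w_1,\dots,w_6)=\frac{(w_1-w_2)(w_3-w_4)(w_5-w_6)}{(w_2-w_3)(w_4-w_5)(w_6-w_1)}$; a map on $V(\mathcal{T}\mathcal{L})$ defines a triangular lattice with $MR=-1$ if this multi-ratio equals $-1$ on every elementary hexagon (vertices counterclockwise) of every $\mathcal{H}\mathcal{L}_j$. In part 1, $u,v$ are the fields of a solution of the $fgh$--system, i.e. they satisfy the equation $\frac{u(\mathfrak{z}_2)-u(\mathfrak{z}_1)}{u(\mathfrak{z}_3)-u(\mathfrak{z}_2)}=\frac{v(\mathfrak{z}_3)-v(\mathfrak{z}_2)}{v(\mathfrak{z}_1)-v(\mathfrak{z}_3)}$ on every elementary triangle with consecutive vertices $\mathfrak{z}_1,\mathfrak{z}_2,\mathfrak{z}_3$ such that $\mathfrak{z}_2-\mathfrak{z}_1,\mathfrak{z}_3-\mathfrak{z}_2,\mathfrak{z}_1-\mathfrak{z}_3\in\{1,\omega,\omega^2\}$ (positively oriented triangle). *)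

theory Defs
  imports Complex_Main
begin

definition omega :: complex where "omega = cis (2 * pi / 3)"
definition epsilon :: complex where "epsilon = cis (pi / 3)"

definition TL_V :: "complex set" where
  "TL_V = {of_int k + of_int l * omega + of_int m * omega ^ 2 | k l m :: int. True}"

text \<open>Centers of the elementary hexagons of HL_j: vertices with k + l + m = j (mod 3).\<close>
definition hex_center :: "int \<Rightarrow> complex \<Rightarrow> bool" where
  "hex_center j z \<longleftrightarrow>
     (\<exists>k l m :: int. z = of_int k + of_int l * omega + of_int m * omega ^ 2 \<and> (k + l + m) mod 3 = j mod 3)"

definition multiratio :: "complex \<Rightarrow> complex \<Rightarrow> complex \<Rightarrow> complex \<Rightarrow> complex \<Rightarrow> complex \<Rightarrow> complex" where
  "multiratio w1 w2 w3 w4 w5 w6 =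
     ((w1 - w2) * (w3 - w4) * (w5 - w6)) / ((w2 - w3) * (w4 - w5) * (w6 - w1))"

definition MR_minus_one :: "(complex \<Rightarrow> complex) \<Rightarrow> bool" where
  "MR_minus_one u \<longleftrightarrow>
     (\<forall>j \<in> {0, 1, 2 :: int}. \<forall>z. hex_center j z \<longrightarrow>
        multiratio (u (z + epsilon ^ 0)) (u (z + epsilon ^ 1)) (u (z + epsilon ^ 2))
                   (u (z + epsilon ^ 3)) (u (z + epsilon ^ 4)) (u (z + epsilon ^ 5)) = -1)"

definition pos_triangle :: "complex \<Rightarrow> complex \<Rightarrow> complex \<Rightarrow> bool" where
  "pos_triangle z1 z2 z3 \<longleftrightarrow>
     z1 \<in> TL_V \<and>
     z2 - z1 \<in> {1, omega, omega ^ 2} \<and> z3 - z2 \<in> {1, omega, omega ^ 2} \<and> z1 - z3 \<in> {1, omega, omega ^ 2}"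

text \<open>The ratios
  are required to be genuine (non-degenerate): the values of u and v at the ends of every
  edge of the triangle are distinct.\<close>
definition fgh_eq :: "(complex \<Rightarrow> complex) \<Rightarrow> (complex \<Rightarrow> complex) \<Rightarrow> bool" where
  "fgh_eq u v \<longleftrightarrow>
     (\<forall>z1 z2 z3. pos_triangle z1 z2 z3 \<longrightarrow>
        u z1 \<noteq> u z2 \<and> u z2 \<noteq> u z3 \<and> u z3 \<noteq> u z1 \<and>
        v z1 \<noteq> v z2 \<and> v z2 \<noteq> v z3 \<and> v z3 \<noteq> v z1 \<and>
        (u z2 - u z1) / (u z3 - u z2) = (v z3 - v z2) / (v z1 - v z3))"

end

theory Submission
  imports Defs
begin


lemma omega_eq: "omega = Complex (-1/2) (sqrt 3 / 2)"
  by (simp add: omega_def cis.ctr cos_120 sin_120)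

lemma epsilon_eq: "epsilon = 1 + omega"
  by (simp add: epsilon_def omega_eq cis.ctr cos_60 sin_60 complex_eq_iff)

lemma omega2: "omega ^ 2 = -1 - omega"
  by (simp add: omega_eq power2_eq_square complex_eq_iff field_simps)

lemma eps_pows: "epsilon ^ 0 = 1" "epsilon ^ 1 = 1 + omega" "epsilon ^ 2 = omega"
   "epsilon ^ 3 = -1" "epsilon ^ 4 = -1 - omega" "epsilon ^ 5 = - omega"
proof -
  have e2: "epsilon ^ 2 = omega" using omega2 by (simp add: epsilon_eq power2_eq_square algebra_simps)
  have e3: "epsilon ^ 3 = -1" using omega2 e2
    by (simp add: epsilon_eq power2_eq_square algebra_simps numeral_3_eq_3)
  show "epsilon ^ 0 = 1" "epsilon ^ 1 = 1 + omega" "epsilon ^ 2 = omega" "epsilon ^ 3 = -1"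
    using e2 e3 by (simp_all add: epsilon_eq)
  have "epsilon ^ 4 = epsilon ^ 2 * epsilon ^ 2" by (simp add: power_add[symmetric])
  then show "epsilon ^ 4 = -1 - omega" using e2 omega2 by (simp add: power2_eq_square)
  have "epsilon ^ 5 = epsilon ^ 3 * epsilon ^ 2" by (simp add: power_add[symmetric])
  then show "epsilon ^ 5 = - omega" using e3 e2 by simp
qed

definition P :: "int \<Rightarrow> int \<Rightarrow> complex" where "P x y = of_int x + of_int y * omega"

lemma P_inj: "P x y = P x' y' \<longleftrightarrow> x = x' \<and> y = y'"
  by (auto simp: P_def omega_eq complex_eq_iff)

lemma TL_V_P: "TL_V = {P x y | x y. True}"
proof -
  have "of_int k + of_int l * omega + of_int m * omega ^ 2 = P (k - m) (l - m)" for k l m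
    by (simp add: P_def omega2 algebra_simps)
  then show ?thesis unfolding TL_V_def
    by (auto; metis add.right_neutral mult_zero_left of_int_0 P_def)
qed

lemma P_in: "P x y \<in> TL_V" by (auto simp: TL_V_P)

lemma hex_center_P: "hex_center j z \<Longrightarrow> \<exists>x y. z = P x y"
  unfolding hex_center_def
proof (elim exE conjE)
  fix k l m assume "z = of_int k + of_int l * omega + of_int m * omega ^ 2"
  then have "z = P (k - m) (l - m)" by (simp add: P_def omega2 algebra_simps)
  then show ?thesis by blast
qed

lemma P_hex_center: "hex_center ((x + y) mod 3) (P x y)"
  unfolding hex_center_def by (rule exI[of _ x], rule exI[of _ y], rule exI[of _ 0]) (simp add: P_def)

lemma P_shift: "P x y + 1 = P (x+1) y" "P x y + (1 + omega) = P (x+1) (y+1)"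
  "P x y + omega = P x (y+1)" "P x y + -1 = P (x-1) y" "P x y + (-1 - omega) = P (x-1) (y-1)"
  "P x y + - omega = P x (y - 1)"
  by (simp_all add: P_def algebra_simps)



definition tri :: "(complex\<Rightarrow>complex) \<Rightarrow> (complex\<Rightarrow>complex) \<Rightarrow> complex \<Rightarrow> complex \<Rightarrow> complex \<Rightarrow> bool" where
  "tri u v z1 z2 z3 \<longleftrightarrow> u z1 \<noteq> u z2 \<and> u z2 \<noteq> u z3 \<and> u z3 \<noteq> u z1 \<and>
        v z1 \<noteq> v z2 \<and> v z2 \<noteq> v z3 \<and> v z3 \<noteq> v z1 \<and>
        (u z2 - u z1) / (u z3 - u z2) = (v z3 - v z2) / (v z1 - v z3)"

lemma fgh_eq_tri: "fgh_eq u v \<longleftrightarrow> (\<forall>z1 z2 z3. pos_triangle z1 z2 z3 \<longrightarrow> tri u v z1 z2 z3)"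
  by (simp add: fgh_eq_def tri_def)

lemma rot_alg:
  fixes u1 u2 u3 v1 v2 v3 :: complex
  assumes "u1 \<noteq> u2" "u2 \<noteq> u3" "u3 \<noteq> u1" "v1 \<noteq> v2" "v2 \<noteq> v3" "v3 \<noteq> v1"
    and "(u2 - u1) / (u3 - u2) = (v3 - v2) / (v1 - v3)"
  shows "(u3 - u2) / (u1 - u3) = (v1 - v3) / (v2 - v1)"
proof -
  have h: "(u2-u1)*(v1-v3) = (v3-v2)*(u3-u2)" using assms
    by (simp add: frac_eq_eq)
  have "(u3-u2)*(v2-v1) = (v1-v3)*(u1-u3)" using h by algebra
  then show ?thesis using assms by (simp add: frac_eq_eq)
qed

lemma tri_rot: "tri u v z1 z2 z3 \<Longrightarrow> tri u v z2 z3 z1"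
  unfolding tri_def using rot_alg by metis

lemma omega2_P: "omega ^ 2 = P (-1) (-1)" by (simp add: omega2 P_def)

lemma dir_cases: "d \<in> {1, omega, omega ^ 2} \<Longrightarrow> \<exists>i j. d = P i j \<and> ((i = 1 \<and> j = 0) \<or> (i = 0 \<and> j = 1) \<or> (i = -1 \<and> j = -1))"
proof -
  assume "d \<in> {1, omega, omega ^ 2}"
  moreover have "1 = P 1 0" "omega = P 0 1" by (simp_all add: P_def)
  ultimately show ?thesis using omega2_P by fastforce
qed

lemma P_add: "P a b + P c d = P (a + c) (b + d)" by (simp add: P_def algebra_simps)

lemma pos_tri_cases:
  assumes "pos_triangle z1 z2 z3"
  shows "\<exists>x y. (z1 = P x y \<and> z2 = P (x+1) y \<and> z3 = P (x+1) (y+1)) \<or>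
               (z2 = P x y \<and> z3 = P (x+1) y \<and> z1 = P (x+1) (y+1)) \<or>
               (z3 = P x y \<and> z1 = P (x+1) y \<and> z2 = P (x+1) (y+1)) \<or>
               (z1 = P x y \<and> z2 = P x (y+1) \<and> z3 = P (x+1) (y+1)) \<or>
               (z2 = P x y \<and> z3 = P x (y+1) \<and> z1 = P (x+1) (y+1)) \<or>
               (z3 = P x y \<and> z1 = P x (y+1) \<and> z2 = P (x+1) (y+1))"
proof -
  from assms obtain a b where z1: "z1 = P a b" unfolding pos_triangle_def TL_V_P by blast
  from assms obtain i1 j1 where d1: "z2 - z1 = P i1 j1" and c1: "(i1 = 1 \<and> j1 = 0) \<or> (i1 = 0 \<and> j1 = 1) \<or> (i1 = -1 \<and> j1 = -1)"
    unfolding pos_triangle_def using dir_cases by blast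
  from assms obtain i2 j2 where d2: "z3 - z2 = P i2 j2" and c2: "(i2 = 1 \<and> j2 = 0) \<or> (i2 = 0 \<and> j2 = 1) \<or> (i2 = -1 \<and> j2 = -1)"
    unfolding pos_triangle_def using dir_cases by blast
  from assms obtain i3 j3 where d3: "z1 - z3 = P i3 j3" and c3: "(i3 = 1 \<and> j3 = 0) \<or> (i3 = 0 \<and> j3 = 1) \<or> (i3 = -1 \<and> j3 = -1)"
    unfolding pos_triangle_def using dir_cases by blast
  have z2: "z2 = P (a + i1) (b + j1)" using d1 z1 P_add[of a b i1 j1] by (simp add: algebra_simps)
  have z3: "z3 = P (a + i1 + i2) (b + j1 + j2)" using d2 z2 P_add[of "a+i1" "b+j1" i2 j2] by (simp add: algebra_simps)
  have "P a b = P (a + i1 + i2 + i3) (b + j1 + j2 + j3)" using d3 z3 z1 P_add[of "a+i1+i2" "b+j1+j2" i3 j3]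
    by (simp add: algebra_simps)
  then have s: "i1 + i2 + i3 = 0" "j1 + j2 + j3 = 0" by (simp_all add: P_inj)
  show ?thesis unfolding z1 z2 z3 using c1 c2 c3 s
    by (elim disjE conjE; simp add: P_inj; presburger)
qed



lemma pos_T: "pos_triangle (P x y) (P (x+1) y) (P (x+1) (y+1))"
  unfolding pos_triangle_def by (intro conjI P_in) (simp_all add: P_def omega2 algebra_simps)
lemma pos_D: "pos_triangle (P x y) (P x (y+1)) (P (x+1) (y+1))"
  unfolding pos_triangle_def by (intro conjI P_in) (simp_all add: P_def omega2 algebra_simps)

lemma fgh_coord: "fgh_eq u v \<longleftrightarrow> (\<forall>x y. tri u v (P x y) (P (x+1) y) (P (x+1) (y+1)) \<and> tri u v (P x y) (P x (y+1)) (P (x+1) (y+1)))"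
proof
  assume "fgh_eq u v" then show "\<forall>x y. tri u v (P x y) (P (x+1) y) (P (x+1) (y+1)) \<and> tri u v (P x y) (P x (y+1)) (P (x+1) (y+1))"
    using pos_T pos_D by (simp add: fgh_eq_tri)
next
  assume h: "\<forall>x y. tri u v (P x y) (P (x+1) y) (P (x+1) (y+1)) \<and> tri u v (P x y) (P x (y+1)) (P (x+1) (y+1))"
  show "fgh_eq u v" unfolding fgh_eq_tri
  proof (intro allI impI)
    fix z1 z2 z3 assume "pos_triangle z1 z2 z3"
    from pos_tri_cases[OF this] obtain x y where
      "(z1 = P x y \<and> z2 = P (x+1) y \<and> z3 = P (x+1) (y+1)) \<or>
               (z2 = P x y \<and> z3 = P (x+1) y \<and> z1 = P (x+1) (y+1)) \<or>
               (z3 = P x y \<and> z1 = P (x+1) y \<and> z2 = P (x+1) (y+1)) \<or>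
               (z1 = P x y \<and> z2 = P x (y+1) \<and> z3 = P (x+1) (y+1)) \<or>
               (z2 = P x y \<and> z3 = P x (y+1) \<and> z1 = P (x+1) (y+1)) \<or>
               (z3 = P x y \<and> z1 = P x (y+1) \<and> z2 = P (x+1) (y+1))" by blast
    then show "tri u v z1 z2 z3" using h[rule_format, of x y]
      by (elim disjE conjE) (simp_all add: tri_rot)
  qed
qed

lemma tri_alg:
  assumes "tri u v z a b"
  shows "((u b - u z) - (u a - u z))*(v a - v z) = (u b - u z)*(v b - v z)"
    "(u b - u z)*((v b - v z) - (v a - v z)) = -((u a - u z)*(v a - v z))"
    "u a - u z \<noteq> 0" "u b - u z \<noteq> 0" "v a - v z \<noteq> 0" "v b - v z \<noteq> 0"
proof -
  have n: "u z \<noteq> u a" "u a \<noteq> u b" "u b \<noteq> u z" "v z \<noteq> v a" "v a \<noteq> v b" "v b \<noteq> v z"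
    and e: "(u a - u z) / (u b - u a) = (v b - v a) / (v z - v b)" using assms unfolding tri_def by auto
  have c: "(u a - u z) * (v z - v b) = (v b - v a) * (u b - u a)" using e n by (simp add: frac_eq_eq)
  show "((u b - u z) - (u a - u z))*(v a - v z) = (u b - u z)*(v b - v z)" using c by algebra
  show "(u b - u z)*((v b - v z) - (v a - v z)) = -((u a - u z)*(v a - v z))" using c by algebra
  show "u a - u z \<noteq> 0" "u b - u z \<noteq> 0" "v a - v z \<noteq> 0" "v b - v z \<noteq> 0" using n by auto
qed

lemma cancel_lemma:
  fixes N D X R :: complex
  assumes a: "N * X = - R" and b: "D * X = R" and X: "X \<noteq> 0" and R: "R \<noteq> 0"
  shows "N / D = -1"
proof -
  have e: "N * X = (- D) * X" by (simp only: a b mult_minus_left)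
  then have "X = 0 \<or> N = - D" by (simp only: mult_cancel_right)
  then have n: "N = - D" using X by blast
  have d: "D \<noteq> 0"
  proof
    assume "D = 0" then have "R = 0" using b by simp
    then show False using R by blast
  qed
  show ?thesis using n d by simp
qed

lemma star_u:
  fixes Ua Ub Uc Ud Ue Uf Va Vb Vc Vd Ve Vf :: complex
  assumes "(Ub-Ua)*Va = Ub*Vb" "(Ub-Uc)*Vc = Ub*Vb" "(Ud-Uc)*Vc = Ud*Vd" "(Ud-Ue)*Ve = Ud*Vd"
    "(Uf-Ue)*Ve = Uf*Vf" "(Uf-Ua)*Va = Uf*Vf"
    and nz: "Ub \<noteq> 0" "Ud \<noteq> 0" "Uf \<noteq> 0" "Va \<noteq> 0" "Vb \<noteq> 0" "Vc \<noteq> 0" "Vd \<noteq> 0" "Ve \<noteq> 0" "Vf \<noteq> 0"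
  shows "((Ua-Ub)*(Uc-Ud)*(Ue-Uf)) / ((Ub-Uc)*(Ud-Ue)*(Uf-Ua)) = -1"
proof (rule cancel_lemma)
  have "(Ua-Ub)*(Uc-Ud)*(Ue-Uf)*(Va*Vc*Ve) = - (((Ub-Ua)*Va)*((Ud-Uc)*Vc)*((Uf-Ue)*Ve))"
    by algebra
  also have "\<dots> = - (Ub*Vb*(Ud*Vd)*(Uf*Vf))" by (simp only: assms)
  finally show "(Ua-Ub)*(Uc-Ud)*(Ue-Uf)*(Va*Vc*Ve) = - (Ub*Vb*(Ud*Vd)*(Uf*Vf))" .
  have "(Ub-Uc)*(Ud-Ue)*(Uf-Ua)*(Va*Vc*Ve) = ((Ub-Uc)*Vc)*((Ud-Ue)*Ve)*((Uf-Ua)*Va)"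
    by algebra
  also have "\<dots> = Ub*Vb*(Ud*Vd)*(Uf*Vf)" by (simp only: assms)
  finally show "(Ub-Uc)*(Ud-Ue)*(Uf-Ua)*(Va*Vc*Ve) = Ub*Vb*(Ud*Vd)*(Uf*Vf)" .
  show "Va*Vc*Ve \<noteq> 0" using nz by simp
  show "Ub*Vb*(Ud*Vd)*(Uf*Vf) \<noteq> 0" using nz by simp
qed

lemma star_v:
  fixes Ua Ub Uc Ud Ue Uf Va Vb Vc Vd Ve Vf :: complex
  assumes "Ub*(Vb-Va) = -(Ua*Va)" "Ub*(Vb-Vc) = -(Uc*Vc)" "Ud*(Vd-Vc) = -(Uc*Vc)" "Ud*(Vd-Ve) = -(Ue*Ve)"
    "Uf*(Vf-Ve) = -(Ue*Ve)" "Uf*(Vf-Va) = -(Ua*Va)"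
    and nz: "Ua \<noteq> 0" "Ub \<noteq> 0" "Uc \<noteq> 0" "Ud \<noteq> 0" "Ue \<noteq> 0" "Uf \<noteq> 0" "Va \<noteq> 0" "Vc \<noteq> 0" "Ve \<noteq> 0"
  shows "((Va-Vb)*(Vc-Vd)*(Ve-Vf)) / ((Vb-Vc)*(Vd-Ve)*(Vf-Va)) = -1"
proof (rule cancel_lemma)
  have "(Va-Vb)*(Vc-Vd)*(Ve-Vf)*(Ub*Ud*Uf) = - ((Ub*(Vb-Va))*(Ud*(Vd-Vc))*(Uf*(Vf-Ve)))"
    by algebra
  also have "\<dots> = - ((-(Ua*Va))*(-(Uc*Vc))*(-(Ue*Ve)))" by (simp only: assms)
  also have "\<dots> = - (- (Ua*Va*(Uc*Vc)*(Ue*Ve)))" by algebra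
  finally show "(Va-Vb)*(Vc-Vd)*(Ve-Vf)*(Ub*Ud*Uf) = - (- (Ua*Va*(Uc*Vc)*(Ue*Ve)))" .
  have "(Vb-Vc)*(Vd-Ve)*(Vf-Va)*(Ub*Ud*Uf) = (Ub*(Vb-Vc))*(Ud*(Vd-Ve))*(Uf*(Vf-Va))"
    by algebra
  also have "\<dots> = (-(Uc*Vc))*(-(Ue*Ve))*(-(Ua*Va))" by (simp only: assms)
  also have "\<dots> = - (Ua*Va*(Uc*Vc)*(Ue*Ve))" by algebra
  finally show "(Vb-Vc)*(Vd-Ve)*(Vf-Va)*(Ub*Ud*Uf) = - (Ua*Va*(Uc*Vc)*(Ue*Ve))" .
  show "Ub*Ud*Uf \<noteq> 0" using nz by simp
  show "- (Ua*Va*(Uc*Vc)*(Ue*Ve)) \<noteq> 0" using nz by simp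
qed

lemma mr_shift: "multiratio a b c d e f = ((a - z) - (b - z)) * ((c - z) - (d - z)) * ((e - z) - (f - z)) /
   (((b - z) - (c - z)) * ((d - z) - (e - z)) * ((f - z) - (a - z)))"
  by (simp add: multiratio_def)

lemma hex_P: "multiratio (u (P x y + epsilon ^ 0)) (u (P x y + epsilon ^ 1)) (u (P x y + epsilon ^ 2))
      (u (P x y + epsilon ^ 3)) (u (P x y + epsilon ^ 4)) (u (P x y + epsilon ^ 5)) =
   multiratio (u (P (x+1) y)) (u (P (x+1) (y+1))) (u (P x (y+1))) (u (P (x-1) y)) (u (P (x-1) (y-1))) (u (P x (y-1)))"
  by (simp only: eps_pows P_shift)

lemma fgh_MR_P:
  assumes "fgh_eq u v"
  shows "multiratio (u (P (x+1) y)) (u (P (x+1) (y+1))) (u (P x (y+1))) (u (P (x-1) y)) (u (P (x-1) (y-1))) (u (P x (y-1))) = -1"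
    "multiratio (v (P (x+1) y)) (v (P (x+1) (y+1))) (v (P x (y+1))) (v (P (x-1) y)) (v (P (x-1) (y-1))) (v (P x (y-1))) = -1"
proof -
  have h: "tri u v (P x y) (P (x+1) y) (P (x+1) (y+1)) \<and> tri u v (P x y) (P x (y+1)) (P (x+1) (y+1))" for x y
    using assms fgh_coord by blast
  have a1: "x - 1 + 1 = x" "y - 1 + 1 = y" by simp_all
  have t0: "tri u v (P x y) (P (x+1) y) (P (x+1) (y+1))" using h by blast
  have t1: "tri u v (P x y) (P x (y+1)) (P (x+1) (y+1))" using h by blast
  have t2: "tri u v (P x y) (P x (y+1)) (P (x-1) y)" using tri_rot[OF h[of "x-1" y, THEN conjunct1, unfolded a1]] .
  have t3: "tri u v (P x y) (P (x-1) (y-1)) (P (x-1) y)" using tri_rot[OF tri_rot[OF h[of "x-1" "y-1", THEN conjunct2, unfolded a1]]] .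
  have t4: "tri u v (P x y) (P (x-1) (y-1)) (P x (y-1))" using tri_rot[OF tri_rot[OF h[of "x-1" "y-1", THEN conjunct1, unfolded a1]]] .
  have t5: "tri u v (P x y) (P (x+1) y) (P x (y-1))" using tri_rot[OF h[of x "y-1", THEN conjunct2, unfolded a1]] .
  note A = tri_alg[OF t0] tri_alg[OF t1] tri_alg[OF t2] tri_alg[OF t3] tri_alg[OF t4] tri_alg[OF t5]
  show "multiratio (u (P (x+1) y)) (u (P (x+1) (y+1))) (u (P x (y+1))) (u (P (x-1) y)) (u (P (x-1) (y-1))) (u (P x (y-1))) = -1"
    apply (subst mr_shift[where z="u (P x y)"])
    by (rule star_u[OF A(1) A(7) A(13) A(19) A(25) A(31) A(4) A(16) A(28) A(5) A(6) A(11) A(18) A(23) A(30)])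
  show "multiratio (v (P (x+1) y)) (v (P (x+1) (y+1))) (v (P x (y+1))) (v (P (x-1) y)) (v (P (x-1) (y-1))) (v (P x (y-1))) = -1"
    apply (subst mr_shift[where z="v (P x y)"])
    by (rule star_v[OF A(2) A(8) A(14) A(20) A(26) A(32) A(3) A(4) A(9) A(16) A(21) A(28) A(5) A(11) A(23)])
qed

lemma MR_coord: "MR_minus_one u \<longleftrightarrow> (\<forall>x y. multiratio (u (P (x+1) y)) (u (P (x+1) (y+1))) (u (P x (y+1))) (u (P (x-1) y)) (u (P (x-1) (y-1))) (u (P x (y-1))) = -1)"
proof
  assume "MR_minus_one u"
  then show "\<forall>x y. multiratio (u (P (x+1) y)) (u (P (x+1) (y+1))) (u (P x (y+1))) (u (P (x-1) y)) (u (P (x-1) (y-1))) (u (P x (y-1))) = -1"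
  proof (intro allI)
    fix x y :: int
    have j: "(x+y) mod 3 \<in> {0,1,2::int}" by auto
    show "multiratio (u (P (x+1) y)) (u (P (x+1) (y+1))) (u (P x (y+1))) (u (P (x-1) y)) (u (P (x-1) (y-1))) (u (P x (y-1))) = -1"
      using \<open>MR_minus_one u\<close> j P_hex_center[of x y] hex_P[of u x y] unfolding MR_minus_one_def by metis
  qed
next
  assume h: "\<forall>x y. multiratio (u (P (x+1) y)) (u (P (x+1) (y+1))) (u (P x (y+1))) (u (P (x-1) y)) (u (P (x-1) (y-1))) (u (P x (y-1))) = -1"
  show "MR_minus_one u" unfolding MR_minus_one_def
  proof (intro ballI allI impI)
    fix j z assume "hex_center j z"
    then obtain x y where "z = P x y" using hex_center_P by blast
    then show "multiratio (u (z + epsilon ^ 0)) (u (z + epsilon ^ 1)) (u (z + epsilon ^ 2))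
                   (u (z + epsilon ^ 3)) (u (z + epsilon ^ 4)) (u (z + epsilon ^ 5)) = -1"
      using h hex_P by metis
  qed
qed

lemma fgh_MR: "fgh_eq u v \<Longrightarrow> MR_minus_one u \<and> MR_minus_one v"
  using fgh_MR_P MR_coord by metis



lemma integrate1:
  fixes T :: "int \<Rightarrow> 'a \<Rightarrow> 'a"
  assumes b: "\<And>x. bij (T x)"
  shows "\<exists>f. f 0 = c \<and> (\<forall>x. f (x+1) = T x (f x))"
proof -
  define g where "g = rec_nat c (\<lambda>n w. T (int n) w)"
  define h where "h = rec_nat c (\<lambda>n w. inv (T (- int n - 1)) w)"
  define f where "f x = (if x \<ge> 0 then g (nat x) else h (nat (-x)))" for x
  have g0: "g 0 = c" and gS: "g (Suc n) = T (int n) (g n)" for n by (simp_all add: g_def)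
  have h0: "h 0 = c" and hS: "h (Suc n) = inv (T (- int n - 1)) (h n)" for n by (simp_all add: h_def)
  have "f (x+1) = T x (f x)" for x
  proof (cases "x \<ge> 0")
    case True
    then have "nat (x+1) = Suc (nat x)" by simp
    then show ?thesis using True by (simp add: f_def gS)
  next
    case False
    define n where "n = nat (- x - 1)"
    have xn: "x = - int n - 1" using False n_def by simp
    have fx: "f x = inv (T x) (h n)" using False xn by (simp add: f_def hS nat_add_distrib)
    have fx1: "f (x+1) = h n"
    proof (cases "n = 0")
      case True then show ?thesis using xn by (simp add: f_def g0 h0)
    next
      case False
      have "nat (-(x+1)) = n" using xn by simp
      then show ?thesis using False xn by (simp add: f_def)
    qed
    show ?thesis using fx fx1 b[of x] by (simp add: bij_inv_eq_iff)
  qed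
  moreover have "f 0 = c" by (simp add: f_def g0)
  ultimately show ?thesis by blast
qed

lemma lattice_all:
  fixes Q :: "int \<Rightarrow> int \<Rightarrow> bool"
  assumes "Q 0 0" "\<And>x y. Q x y \<longleftrightarrow> Q (x+1) y" "\<And>x y. Q x y \<longleftrightarrow> Q x (y+1)"
  shows "Q x y"
proof -
  have "Q x 0"
  proof (induct x rule: int_induct[where k=0])
    case base then show ?case using assms(1) .
  next
    case (step1 i) then show ?case using assms(2) by blast
  next
    case (step2 i) then show ?case using assms(2)[of "i-1" 0] by simp
  qed
  then show ?thesis
  proof (induct y rule: int_induct[where k=0])
    case base then show ?case .
  next
    case (step1 i) then show ?case using assms(3) by blast
  next
    case (step2 i) then show ?case using assms(3)[of x "i-1"] by simp
  qed
qed

lemma integrate2: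
  fixes H V :: "int \<Rightarrow> int \<Rightarrow> 'a \<Rightarrow> 'a"
  assumes bH: "\<And>x y. bij (H x y)" and bV: "\<And>x y. bij (V x y)"
    and comm: "\<And>x y w. V (x+1) y (H x y w) = H x (y+1) (V x y w)"
  shows "\<exists>F. F 0 0 = c \<and> (\<forall>x y. F (x+1) y = H x y (F x y)) \<and> (\<forall>x y. F x (y+1) = V x y (F x y))"
proof -
  obtain g where g0: "g 0 = c" and gS: "\<And>x. g (x+1) = H x 0 (g x)"
    using integrate1[of "\<lambda>x. H x 0" c, OF bH] by blast
  have "\<exists>f. f 0 = g x \<and> (\<forall>y. f (y+1) = V x y (f y))" for x
    by (rule integrate1) (rule bV)
  then have "\<forall>x. \<exists>f. f 0 = g x \<and> (\<forall>y. f (y+1) = V x y (f y))" by blast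
  from choice[OF this] obtain F where FF: "\<forall>x. F x 0 = g x \<and> (\<forall>y. F x (y+1) = V x y (F x y))"
    by blast
  then have F0: "\<And>x. F x 0 = g x" and FS: "\<And>x y. F x (y+1) = V x y (F x y)" by blast+
  have "F (x+1) y = H x y (F x y)" for x y
  proof (induct y rule: int_induct[where k=0])
    case base then show ?case using F0 gS by simp
  next
    case (step1 i) then show ?case using FS comm by simp
  next
    case (step2 i)
    have "V (x+1) (i-1) (F (x+1) (i-1)) = V (x+1) (i-1) (H x (i-1) (F x (i-1)))"
      using step2(2) FS[of "x+1" "i-1"] FS[of x "i-1"] comm[of x "i-1"] by simp
    then show ?case using bV[of "x+1" "i-1"] unfolding bij_def inj_def by blast
  qed
  then show ?thesis using F0 g0 FS by blast
qed


lemma comm_alg: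
  fixes c n0 n1 n2 n3 n4 n5 r :: complex
  assumes hyp: "(n0-n1)*(n2-n3)*(n4-n5) = -((n1-n2)*(n3-n4)*(n5-n0))"
    and nz: "n5 \<noteq> n0" "c \<noteq> n1" "n3 \<noteq> c" "n3 \<noteq> n2" "n2 \<noteq> n1" "n0 \<noteq> n1" "r \<noteq> 0" "n5 \<noteq> c"
  shows "(n5-n4)/(n5-n0)/r * (r*((c-n5)/(c-n1))) =
         ((n5-c)/(n3-c)) * ((n3-n4)/(n3-n2)) * ((c-n3)/(c-n1)/((n0-n1)/(n2-n1)))"
proof -
  have l: "(n5-n4)/(n5-n0)/r * (r*((c-n5)/(c-n1))) = ((n5-n4)*(c-n5)) / ((n5-n0)*(c-n1))"
    using nz by simp
  have id: "(n5 - c) * (c - n3) = (c - n5) * (n3 - c)" by algebra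
  have r: "((n5-c)/(n3-c)) * ((n3-n4)/(n3-n2)) * ((c-n3)/(c-n1)/((n0-n1)/(n2-n1))) =
     ((c-n5)*(n3-n4)*(n2-n1)) / ((n3-n2)*(c-n1)*(n0-n1))"
    using nz id by (simp add: divide_simps)
  have "((n5-n4)*(c-n5)) * ((n3-n2)*(c-n1)*(n0-n1)) = ((c-n5)*(n3-n4)*(n2-n1)) * ((n5-n0)*(c-n1))"
    using hyp by algebra
  then show ?thesis unfolding l r using nz by (simp add: frac_eq_eq)
qed


lemma mr_facts:
  assumes "multiratio a b c d e f = -1"
  shows "(a-b)*(c-d)*(e-f) = -((b-c)*(d-e)*(f-a))" "a \<noteq> b" "b \<noteq> c" "c \<noteq> d" "d \<noteq> e" "e \<noteq> f" "f \<noteq> a"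
proof -
  have den: "(b-c)*(d-e)*(f-a) \<noteq> 0"
  proof
    assume "(b-c)*(d-e)*(f-a) = 0"
    then have "multiratio a b c d e f = 0" by (simp add: multiratio_def)
    then show False using assms by simp
  qed
  have "((a-b)*(c-d)*(e-f)) / ((b-c)*(d-e)*(f-a)) = -1" using assms by (simp add: multiratio_def)
  then show num: "(a-b)*(c-d)*(e-f) = -((b-c)*(d-e)*(f-a))" using den by (simp add: divide_eq_eq)
  then have "(a-b)*(c-d)*(e-f) \<noteq> 0" using den by simp
  then show "a \<noteq> b" "c \<noteq> d" "e \<noteq> f" by auto
  show "b \<noteq> c" "d \<noteq> e" "f \<noteq> a" using den by auto
qed

lemma bij_mult: "r \<noteq> (0::complex) \<Longrightarrow> bij (\<lambda>w. r * w)"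
proof (rule bijI')
  assume r: "r \<noteq> 0"
  show "(r * x = r * y) = (x = y)" for x y using r by simp
  show "\<exists>x. y = r * x" for y using r by (intro exI[of _ "y / r"]) simp
qed

lemma bij_add: "bij (\<lambda>w::complex. w + r)"
proof (rule bijI')
  show "(x + r = y + r) = (x = y)" for x y by simp
  show "\<exists>x. y = x + r" for y by (intro exI[of _ "y - r"]) simp
qed

lemma tri_alg_T:
  fixes a b c p q r m :: complex
  assumes "a \<noteq> b" "b \<noteq> c" "c \<noteq> a" "m \<noteq> 0" "q = p + m*(a - c)" "r = q + m*(b - a)"
  shows "a \<noteq> b \<and> b \<noteq> c \<and> c \<noteq> a \<and> p \<noteq> q \<and> q \<noteq> r \<and> r \<noteq> p \<and> (b - a)/(c - b) = (r - q)/(p - r)"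
proof -
  have pr: "p - r = m * (c - b)" using assms(5,6) by algebra
  have qp: "q - p = m * (a - c)" and rq: "r - q = m * (b - a)" using assms by simp_all
  have "m * (a - c) \<noteq> 0" "m * (b - a) \<noteq> 0" "m * (c - b) \<noteq> 0" using assms by auto
  then have "p \<noteq> q" "q \<noteq> r" "r \<noteq> p" using qp rq pr by auto
  moreover have "(b - a)/(c - b) = (r - q)/(p - r)"
    unfolding pr \<open>r - q = m * (b - a)\<close> using assms by simp
  ultimately show ?thesis using assms by blast
qed

definition coords :: "complex \<Rightarrow> int \<times> int" where
  "coords z = (SOME p. z = P (fst p) (snd p))"

lemma coords_P: "coords (P x y) = (x, y)"
proof -
  have "P x y = P (fst (x,y)) (snd (x,y))" by simp
  then have "P x y = P (fst (coords (P x y))) (snd (coords (P x y)))"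
    unfolding coords_def by (rule someI)
  then show ?thesis by (simp add: P_inj prod_eq_iff)
qed

lemma exists_v:
  assumes "MR_minus_one u"
  shows "\<exists>v. fgh_eq u v"
proof -
  define U where "U x y = u (P x y)" for x y
  have hex: "multiratio (U (x+1) y) (U (x+1) (y+1)) (U x (y+1)) (U (x-1) y) (U (x-1) (y-1)) (U x (y-1)) = -1" for x y
    using assms unfolding MR_coord U_def by blast
  have eh: "U (a+1) b \<noteq> U a b" for a b using mr_facts(3)[OF hex[of a "b-1"]] by simp
  have eg: "U a (b+1) \<noteq> U a b" for a b using mr_facts(2)[OF hex[of "a-1" b]] by simp
  have ed: "U (a+1) (b+1) \<noteq> U a b" for a b using mr_facts(4)[OF hex[of "a+1" b]] by simp
  define rho1 where "rho1 x y = (U (x+1) y - U (x+1) (y+1)) / (U x (y+1) - U (x+1) (y+1))" for x y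
  define Hr where "Hr x y = (U (x+1) y - U x y) / (U (x+1) y - U (x+2) (y+1)) / rho1 (x+1) y" for x y
  define Vr where "Vr x y = rho1 x y * ((U x (y+1) - U x y) / (U x (y+1) - U (x+1) (y+2)))" for x y
  have e2: "x + 1 + 1 = x + (2::int)" for x by simp
  have ed2: "U (a+1) b \<noteq> U (a+2) (b+1)" for a b using ed[of "a+1" b] by (simp add: e2 eq_commute)
  have ed3: "U a (b+1) \<noteq> U (a+1) (b+2)" for a b using ed[of a "b+1"] by (simp add: e2 eq_commute)
  have rnz: "rho1 x y \<noteq> 0" for x y unfolding rho1_def using eg[of "x+1" y] eh[of x "y+1"] by simp
  have Hnz: "Hr x y \<noteq> 0" for x y unfolding Hr_def using eh[of x y] ed2[of x y] rnz[of "x+1" y] by simp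
  have Vnz: "Vr x y \<noteq> 0" for x y unfolding Vr_def using eg[of x y] ed3[of x y] rnz[of x y] by simp
  have comm: "Hr x y * Vr (x+1) y = Vr x y * Hr x (y+1)" for x y
  proof -
    have m: "multiratio (U (x+2) (y+1)) (U (x+2) (y+2)) (U (x+1) (y+2)) (U x (y+1)) (U x y) (U (x+1) y) = -1"
      using hex[of "x+1" "y+1"] by (simp add: e2)
    note mf = mr_facts[OF m]
    have c1: "U (x+1) (y+1) \<noteq> U (x+2) (y+2)" using ed[of "x+1" "y+1"] by (simp add: e2 eq_commute)
    have c2: "U x (y+1) \<noteq> U (x+1) (y+1)" using eh[of x "y+1"] by (simp add: eq_commute)
    have c3: "U (x+1) y \<noteq> U (x+1) (y+1)" using eg[of "x+1" y] by (simp add: eq_commute)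
    have "Hr x y * Vr (x+1) y = (U (x+1) y - U x y) / (U (x+1) y - U (x+2) (y+1)) / rho1 (x+1) y *
          (rho1 (x+1) y * ((U (x+1) (y+1) - U (x+1) y) / (U (x+1) (y+1) - U (x+2) (y+2))))"
      by (simp add: Hr_def Vr_def e2)
    also have "\<dots> = ((U (x+1) y - U (x+1) (y+1)) / (U x (y+1) - U (x+1) (y+1))) *
        ((U x (y+1) - U x y) / (U x (y+1) - U (x+1) (y+2))) *
        ((U (x+1) (y+1) - U x (y+1)) / (U (x+1) (y+1) - U (x+2) (y+2)) /
           ((U (x+2) (y+1) - U (x+2) (y+2)) / (U (x+1) (y+2) - U (x+2) (y+2))))"
      by (rule comm_alg[OF mf(1)]) (use mf c1 c2 c3 rnz in auto)
    also have "\<dots> = Vr x y * Hr x (y+1)"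
      by (simp add: Hr_def Vr_def rho1_def e2)
    finally show ?thesis .
  qed
  obtain mu where mu0: "mu 0 0 = 1" and muH: "\<And>x y. mu (x+1) y = Hr x y * mu x y"
      and muV: "\<And>x y. mu x (y+1) = Vr x y * mu x y"
  proof -
    have "\<exists>F. F 0 0 = 1 \<and> (\<forall>x y. F (x+1) y = Hr x y * F x y) \<and> (\<forall>x y. F x (y+1) = Vr x y * F x y)"
    proof (rule integrate2)
      show "bij (\<lambda>w. Hr x y * w)" for x y using Hnz bij_mult by blast
      show "bij (\<lambda>w. Vr x y * w)" for x y using Vnz bij_mult by blast
      show "Vr (x+1) y * (Hr x y * w) = Hr x (y+1) * (Vr x y * w)" for x y w
      proof -
        have "Vr (x+1) y * (Hr x y * w) = (Hr x y * Vr (x+1) y) * w" by (simp only: mult_ac)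
        also have "\<dots> = (Vr x y * Hr x (y+1)) * w" by (simp only: comm)
        also have "\<dots> = Hr x (y+1) * (Vr x y * w)" by (simp only: mult_ac)
        finally show ?thesis .
      qed
    qed
    then show ?thesis using that by blast
  qed
  have munz: "mu x y \<noteq> 0" for x y
    by (rule lattice_all[where Q="\<lambda>x y. mu x y \<noteq> 0"]) (use mu0 muH muV Hnz Vnz in auto)
  define hh where "hh x y = mu x y * (U x y - U (x+1) (y+1))" for x y
  define gg where "gg x y = mu x y * rho1 x y * (U x y - U (x+1) (y+1))" for x y
  have G1: "gg (x+1) y = mu x y * (U (x+1) y - U x y)" for x y
  proof -
    have "gg (x+1) y = Hr x y * rho1 (x+1) y * (U (x+1) y - U (x+2) (y+1)) * mu x y"
      by (simp add: gg_def muH e2 mult_ac)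
    also have "\<dots> = mu x y * (U (x+1) y - U x y)"
      unfolding Hr_def using rnz[of "x+1" y] ed2[of x y] by simp
    finally show ?thesis .
  qed
  have H1: "hh x (y+1) = mu x y * rho1 x y * (U x (y+1) - U x y)" for x y
  proof -
    have "hh x (y+1) = Vr x y * (U x (y+1) - U (x+1) (y+2)) * mu x y"
      by (simp add: hh_def muV e2 mult_ac)
    also have "\<dots> = mu x y * rho1 x y * (U x (y+1) - U x y)"
      unfolding Vr_def using ed3[of x y] by simp
    finally show ?thesis .
  qed
  have commv: "hh x y + gg (x+1) y = gg x y + hh x (y+1)" for x y
  proof -
    have r: "rho1 x y * (U x (y+1) - U (x+1) (y+1)) = U (x+1) y - U (x+1) (y+1)"
      unfolding rho1_def using eh[of x "y+1"] by simp
    have "hh x y + gg (x+1) y = mu x y * (U (x+1) y - U (x+1) (y+1))"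
      unfolding G1 hh_def by algebra
    also have "\<dots> = mu x y * (rho1 x y * (U x (y+1) - U (x+1) (y+1)))" using r by simp
    also have "\<dots> = gg x y + hh x (y+1)" unfolding H1 gg_def by algebra
    finally show ?thesis .
  qed
  obtain VV where VVH: "\<And>x y. VV (x+1) y = VV x y + hh x y"
      and VVV: "\<And>x y. VV x (y+1) = VV x y + gg x y"
  proof -
    have "\<exists>F. F 0 0 = 0 \<and> (\<forall>x y. F (x+1) y = F x y + hh x y) \<and> (\<forall>x y. F x (y+1) = F x y + gg x y)"
    proof (rule integrate2)
      show "bij (\<lambda>w. w + hh x y)" for x y using bij_add by blast
      show "bij (\<lambda>w. w + gg x y)" for x y using bij_add by blast
      show "w + hh x y + gg (x+1) y = w + gg x y + hh x (y+1)" for x y w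
        using commv[of x y] by (simp only: add.assoc)
    qed
    then show ?thesis using that by blast
  qed
  define v where "v z = VV (fst (coords z)) (snd (coords z))" for z
  have vP: "v (P x y) = VV x y" for x y by (simp add: v_def coords_P)
  have "fgh_eq u v" unfolding fgh_coord
  proof (intro allI conjI)
    fix x y
    have n1: "U x y \<noteq> U (x+1) y" using eh[of x y] by (simp add: eq_commute)
    have n2: "U (x+1) y \<noteq> U (x+1) (y+1)" using eg[of "x+1" y] by (simp add: eq_commute)
    have n3: "U (x+1) (y+1) \<noteq> U x y" using ed[of x y] .
    have q: "VV (x+1) y = VV x y + mu x y * (U x y - U (x+1) (y+1))" using VVH[of x y] by (simp add: hh_def)
    have r: "VV (x+1) (y+1) = VV (x+1) y + mu x y * (U (x+1) y - U x y)" using VVV[of "x+1" y] by (simp add: G1)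
    note tt = tri_alg_T[OF n1 n2 n3 munz[of x y] q r]
    show "tri u v (P x y) (P (x+1) y) (P (x+1) (y+1))"
      unfolding tri_def vP using tt[unfolded U_def] by blast
    have m1: "U x y \<noteq> U x (y+1)" using eg[of x y] by (simp add: eq_commute)
    have m2: "U x (y+1) \<noteq> U (x+1) (y+1)" using eh[of x "y+1"] by (simp add: eq_commute)
    have mnz: "mu x y * rho1 x y \<noteq> 0" using munz[of x y] rnz[of x y] by simp
    have q2: "VV x (y+1) = VV x y + mu x y * rho1 x y * (U x y - U (x+1) (y+1))" using VVV[of x y] by (simp add: gg_def)
    have r2: "VV (x+1) (y+1) = VV x (y+1) + mu x y * rho1 x y * (U x (y+1) - U x y)" using VVH[of x "y+1"] by (simp add: H1)
    note tt2 = tri_alg_T[OF m1 m2 n3 mnz q2 r2]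
    show "tri u v (P x y) (P x (y+1)) (P (x+1) (y+1))"
      unfolding tri_def vP using tt2[unfolded U_def] by blast
  qed
  then show ?thesis by blast
qed



lemma R_alg:
  fixes v1 v2 v3 w1 w2 w3 :: complex
  assumes "v1 \<noteq> v2" "v2 \<noteq> v3" "v3 \<noteq> v1" "w1 \<noteq> w2" "w2 \<noteq> w3" "w3 \<noteq> w1"
    and e: "(v3-v2)/(v1-v3) = (w3-w2)/(w1-w3)"
  shows "(w2-w1)/(v2-v1) = (w3-w2)/(v3-v2)" "(w2-w1)/(v2-v1) = (w3-w1)/(v3-v1)"
proof -
  have c: "(v3-v2)*(w1-w3) = (w3-w2)*(v1-v3)" using e assms by (simp add: frac_eq_eq)
  have g1: "(w2-w1)*(v3-v2) = (w3-w2)*(v2-v1)" using c by algebra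
  have g2: "(w2-w1)*(v3-v1) = (w3-w1)*(v2-v1)" using c by algebra
  show "(w2-w1)/(v2-v1) = (w3-w2)/(v3-v2)" using g1 assms by (simp add: frac_eq_eq)
  show "(w2-w1)/(v2-v1) = (w3-w1)/(v3-v1)" using g2 assms by (simp add: frac_eq_eq)
qed

definition ratioR :: "(complex \<Rightarrow> complex) \<Rightarrow> (complex \<Rightarrow> complex) \<Rightarrow> complex \<Rightarrow> complex \<Rightarrow> complex" where
  "ratioR v w a b = (w b - w a) / (v b - v a)"

lemma tri_R:
  assumes "tri u v z1 z2 z3" "tri u w z1 z2 z3"
  shows "ratioR v w z1 z2 = ratioR v w z2 z3" "ratioR v w z1 z2 = ratioR v w z1 z3"
proof -
  have e: "(v z3 - v z2)/(v z1 - v z3) = (w z3 - w z2)/(w z1 - w z3)"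
    using assms unfolding tri_def by simp
  note R = R_alg[OF _ _ _ _ _ _ e]
  show "ratioR v w z1 z2 = ratioR v w z2 z3" "ratioR v w z1 z2 = ratioR v w z1 z3"
    unfolding ratioR_def using R assms unfolding tri_def by blast+
qed

lemma unique_v:
  assumes "fgh_eq u v" "fgh_eq u w"
  shows "\<exists>a b. a \<noteq> 0 \<and> (\<forall>z\<in>TL_V. w z = a * v z + b)"
proof -
  have hv: "tri u v (P x y) (P (x+1) y) (P (x+1) (y+1)) \<and> tri u v (P x y) (P x (y+1)) (P (x+1) (y+1))" for x y
    using assms(1) fgh_coord by blast
  have hw: "tri u w (P x y) (P (x+1) y) (P (x+1) (y+1)) \<and> tri u w (P x y) (P x (y+1)) (P (x+1) (y+1))" for x y
    using assms(2) fgh_coord by blast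
  have RT: "ratioR v w (P x y) (P (x+1) y) = ratioR v w (P (x+1) y) (P (x+1) (y+1))"
     "ratioR v w (P x y) (P (x+1) y) = ratioR v w (P x y) (P (x+1) (y+1))" for x y
    using tri_R[of u v _ _ _ w] hv[of x y] hw[of x y] by blast+
  have RD: "ratioR v w (P x y) (P x (y+1)) = ratioR v w (P x (y+1)) (P (x+1) (y+1))"
     "ratioR v w (P x y) (P x (y+1)) = ratioR v w (P x y) (P (x+1) (y+1))" for x y
    using tri_R[of u v _ _ _ w] hv[of x y] hw[of x y] by blast+
  define K where "K x y = ratioR v w (P x y) (P (x+1) y)" for x y
  have K1: "K x y = K x (y+1)" for x y
    unfolding K_def using RT(2)[of x y] RD[of x y] by simp
  have K2: "K x y = K (x+1) y" for x y
  proof -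
    have e2: "x + 1 + 1 = x + 2" by simp
    have "K (x+1) y = ratioR v w (P (x+1) y) (P (x+1+1) (y+1))"
      unfolding K_def using RT(2)[of "x+1" y] .
    also have "\<dots> = ratioR v w (P (x+1) y) (P (x+1) (y+1))"
      using RD[of "x+1" y] by simp
    also have "\<dots> = K x y" unfolding K_def using RT(1)[of x y] by simp
    finally show ?thesis by simp
  qed
  have Kc: "K x y = K 0 0" for x y
    by (rule lattice_all[where Q="\<lambda>x y. K x y = K 0 0"]) (use K1 K2 in auto)
  define a where "a = K 0 0"
  have gR: "ratioR v w (P x y) (P x (y+1)) = a" for x y
    using RD(2)[of x y] RT(2)[of x y] Kc[of x y] unfolding a_def K_def by simp
  have hR: "ratioR v w (P x y) (P (x+1) y) = a" for x y
    using Kc[of x y] unfolding a_def K_def by simp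
  have vh: "v (P (x+1) y) \<noteq> v (P x y)" "v (P x (y+1)) \<noteq> v (P x y)" for x y
    using hv[of x y] unfolding tri_def by auto
  have wh: "w (P (x+1) y) \<noteq> w (P x y)" for x y
    using hw[of x y] unfolding tri_def by auto
  have anz: "a \<noteq> 0" using hR[of 0 0] vh(1)[of 0 0] wh[of 0 0] unfolding ratioR_def by auto
  have Eh: "w (P (x+1) y) - w (P x y) = a * (v (P (x+1) y) - v (P x y))" for x y
    using hR[of x y] vh(1)[of x y] unfolding ratioR_def by (simp add: divide_eq_eq)
  have Eg: "w (P x (y+1)) - w (P x y) = a * (v (P x (y+1)) - v (P x y))" for x y
    using gR[of x y] vh(2)[of x y] unfolding ratioR_def by (simp add: divide_eq_eq)
  define D where "D x y = w (P x y) - a * v (P x y)" for x y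
  have D1: "D x y = D (x+1) y" for x y
  proof -
    have "D (x+1) y - D x y = (w (P (x+1) y) - w (P x y)) - a * (v (P (x+1) y) - v (P x y))"
      unfolding D_def by algebra
    then show ?thesis using Eh[of x y] by simp
  qed
  have D2: "D x y = D x (y+1)" for x y
  proof -
    have "D x (y+1) - D x y = (w (P x (y+1)) - w (P x y)) - a * (v (P x (y+1)) - v (P x y))"
      unfolding D_def by algebra
    then show ?thesis using Eg[of x y] by simp
  qed
  have Dc: "D x y = D 0 0" for x y
    by (rule lattice_all[where Q="\<lambda>x y. D x y = D 0 0"]) (use D1 D2 in auto)
  have "\<forall>z\<in>TL_V. w z = a * v z + D 0 0"
  proof
    fix z assume "z \<in> TL_V"
    then obtain x y where z: "z = P x y" unfolding TL_V_P by blast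
    show "w z = a * v z + D 0 0" using Dc[of x y] unfolding z D_def by (simp add: algebra_simps)
  qed
  then show ?thesis using anz by blast
qed

lemma aff_diff: "(a * x + b) - (a * y + b) = a * (x - y)" for a b x y :: complex
  by (simp add: algebra_simps)

lemma fgh_affine2:
  assumes "fgh_eq u v" "a \<noteq> 0"
  shows "fgh_eq u (\<lambda>z. a * v z + b)"
  using assms unfolding fgh_eq_def by (simp add: aff_diff right_diff_distrib[symmetric])

lemma fgh_affine1:
  assumes "fgh_eq w u" "a \<noteq> 0"
  shows "fgh_eq (\<lambda>z. a * w z + b) u"
  using assms unfolding fgh_eq_def by (simp add: aff_diff right_diff_distrib[symmetric])

lemma tri_cyc:
  assumes h1: "tri u v z1 z2 z3" and h2: "tri v w z1 z2 z3"
  shows "tri w u z1 z2 z3"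
proof -
  have e1: "(u z3 - u z2)/(u z1 - u z3) = (v z1 - v z3)/(v z2 - v z1)"
    using tri_rot[OF h1] unfolding tri_def by blast
  have e2: "(v z1 - v z3)/(v z2 - v z1) = (w z2 - w z1)/(w z3 - w z2)"
    using tri_rot[OF tri_rot[OF h2]] unfolding tri_def by blast
  show ?thesis using h1 h2 e1 e2 unfolding tri_def by simp
qed

lemma fgh_cyc: "fgh_eq u v \<Longrightarrow> fgh_eq v w \<Longrightarrow> fgh_eq w u"
  unfolding fgh_eq_tri using tri_cyc by blast



theorem theorem13:
  shows "(\<forall>u v. fgh_eq u v \<longrightarrow> MR_minus_one u \<and> MR_minus_one v)
    \<and> (\<forall>u. MR_minus_one u \<longrightarrow>
         (\<exists>v. fgh_eq u v
              \<and> (\<forall>a b. a \<noteq> 0 \<longrightarrow> fgh_eq u (\<lambda>z. a * v z + b))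
              \<and> (\<forall>v'. fgh_eq u v' \<longrightarrow> (\<exists>a b. a \<noteq> 0 \<and> (\<forall>z \<in> TL_V. v' z = a * v z + b)))
              \<and> MR_minus_one v))
    \<and> (\<forall>u v. fgh_eq u v \<longrightarrow>
         (\<exists>w. fgh_eq v w \<and> fgh_eq w u
              \<and> (\<forall>a b. a \<noteq> 0 \<longrightarrow> fgh_eq v (\<lambda>z. a * w z + b) \<and> fgh_eq (\<lambda>z. a * w z + b) u)
              \<and> (\<forall>w'. fgh_eq v w' \<and> fgh_eq w' u \<longrightarrow>
                     (\<exists>a b. a \<noteq> 0 \<and> (\<forall>z \<in> TL_V. w' z = a * w z + b)))
              \<and> MR_minus_one w))"
proof (intro conjI allI impI)
  fix u v assume "fgh_eq u v"
  then show "MR_minus_one u" "MR_minus_one v" using fgh_MR by blast+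
next
  fix u assume "MR_minus_one u"
  then obtain v where v: "fgh_eq u v" using exists_v by blast
  show "\<exists>v. fgh_eq u v
              \<and> (\<forall>a b. a \<noteq> 0 \<longrightarrow> fgh_eq u (\<lambda>z. a * v z + b))
              \<and> (\<forall>v'. fgh_eq u v' \<longrightarrow> (\<exists>a b. a \<noteq> 0 \<and> (\<forall>z \<in> TL_V. v' z = a * v z + b)))
              \<and> MR_minus_one v"
    using v fgh_affine2[OF v] unique_v[OF v] fgh_MR[OF v] by blast
next
  fix u v assume uv: "fgh_eq u v"
  then have "MR_minus_one v" using fgh_MR by blast
  then obtain w where vw: "fgh_eq v w" using exists_v by blast
  have wu: "fgh_eq w u" using fgh_cyc[OF uv vw] .
  show "\<exists>w. fgh_eq v w \<and> fgh_eq w u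
              \<and> (\<forall>a b. a \<noteq> 0 \<longrightarrow> fgh_eq v (\<lambda>z. a * w z + b) \<and> fgh_eq (\<lambda>z. a * w z + b) u)
              \<and> (\<forall>w'. fgh_eq v w' \<and> fgh_eq w' u \<longrightarrow>
                     (\<exists>a b. a \<noteq> 0 \<and> (\<forall>z \<in> TL_V. w' z = a * w z + b)))
              \<and> MR_minus_one w"
    using vw wu fgh_affine2[OF vw] fgh_affine1[OF wu] unique_v[OF vw] fgh_MR[OF vw] by blast
qed

end
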